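(* Consider the ViSE model described in the context, with $n$ participants, $\ell$ egoists and $g=n-\ell$ group members ($1\le \ell\le n-1$), environment parameters $\mu\in\mathbb{R}$, $\sigma>0$, majority threshold $\alpha\in[0,1]$ and group claims threshold $t\in\mathbb{R}$. Let $\gamma=\alpha+\delta-1$ with $\delta=\ell/n$, let $P=F\!\left(\frac{(\mu-t)\sqrt{g}}{\sigma}\right)$ and $Q=1-P$. Then the mathematical expectation of the capital increment $\widetilde{d}_{\mathcal{E}}$ of a (fixed) egoist in one voting step is $$\mathrm{M}(\widetilde{d}_{\mathcal{E}})=\mu^+(\mu,\sigma,\ell,\gamma n)\,P+\mu^+(\mu,\sigma,\ell,\alpha n)\,Q .$$
   Context: ViSE model (one voting step). A society consists of $n$ participants: $\ell$ "egoists" and $g=n-\ell$ "group members", with $1\le\ell\le n-1$; $\delta=\ell/n$ is the proportion of egoists. Fix $\mu\in\mathbb{R}$, $\sigma>0$, a majority threshold $\alpha\in[0,1]$ and a group claims threshold $t\in\mathbb{R}$. A proposal is a random vector $(\zeta_1,\dots,\zeta_n)$ of independent $N(\mu,\sigma^2)$ random variables, $\zeta_i$ being the proposed capital increment of participant $i$. Each egoist votes for the proposal iff his own component is strictly positive. All group members vote for the proposal iff the arithmetic mean of the components of the group members is strictly greater than $t$; otherwise they all vote against. The proposal is accepted iff the number of votes for it is strictly greater than $\alpha n$. If accepted, each participant's capital increment equals his component; otherwise every participant's capital increment is $0$. $F$ and $f$ denote the standard normal distribution function and density. For an integer $\ell\ge1$ and real $\ell_0$, $\mu^+(\mu,\sigma,\ell,\ell_0)$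 denotes the expectation of the "normal voting sample": if $\xi_1,\dots,\xi_\ell$ are i.i.d. $N(\mu,\sigma^2)$ and $N=\#\{i:\xi_i>0\}$, then $\mu^+(\mu,\sigma,\ell,\ell_0)=\mathrm{M}\big(\xi_1\cdot\mathbf{1}\{N>\ell_0\}\big)$, i.e. the expected increment of a member of a society of $\ell$ egoists when a proposal is accepted iff more than $\ell_0$ of them receive positive increments. *)

theory Defs
  imports "HOL-Probability.Probability"
begin

definition std_normal_cdf :: "real \<Rightarrow> real" where
  "std_normal_cdf x = cdf (density lborel std_normal_density) x"

definition proposal_space :: "nat \<Rightarrow> real \<Rightarrow> real \<Rightarrow> (nat \<Rightarrow> real) measure" where
  "proposal_space m \<mu> \<sigma> = PiM {..<m} (\<lambda>_. density lborel (normal_density \<mu> \<sigma>))"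

definition mu_plus :: "real \<Rightarrow> real \<Rightarrow> nat \<Rightarrow> real \<Rightarrow> real" where
  "mu_plus \<mu> \<sigma> l l0 =
     integral\<^sup>L (proposal_space l \<mu> \<sigma>)
       (\<lambda>\<xi>. \<xi> 0 * (if real (card {i. i < l \<and> \<xi> i > 0}) > l0 then 1 else 0))"

text \<open>ViSE model, one step: participants 0..l-1 are egoists, l..n-1 group members.\<close>
definition vise_votes_for :: "nat \<Rightarrow> nat \<Rightarrow> real \<Rightarrow> (nat \<Rightarrow> real) \<Rightarrow> nat" where
  "vise_votes_for n l t \<zeta> =
     card {i. i < l \<and> \<zeta> i > 0}
     + (if (\<Sum>i\<in>{l..<n}. \<zeta> i) / real (n - l) > t then n - l else 0)"

definition vise_accepted :: "nat \<Rightarrow> nat \<Rightarrow> real \<Rightarrow> real \<Rightarrow> (nat \<Rightarrow> real) \<Rightarrow> bool" where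
  "vise_accepted n l \<alpha> t \<zeta> \<longleftrightarrow> real (vise_votes_for n l t \<zeta>) > \<alpha> * real n"

definition vise_increment :: "nat \<Rightarrow> nat \<Rightarrow> real \<Rightarrow> real \<Rightarrow> (nat \<Rightarrow> real) \<Rightarrow> nat \<Rightarrow> real" where
  "vise_increment n l \<alpha> t \<zeta> i = (if vise_accepted n l \<alpha> t \<zeta> then \<zeta> i else 0)"

end

theory Submission
  imports Defs
begin

abbreviation NN :: "real \<Rightarrow> real \<Rightarrow> real measure" where
  "NN \<mu> \<sigma> \<equiv> density lborel (\<lambda>x. ennreal (normal_density \<mu> \<sigma> x))"

lemma NN_prob: "0 < \<sigma> \<Longrightarrow> prob_space (NN \<mu> \<sigma>)"
  by (rule prob_space_normal_density)

lemma integrable_NN_id: "0 < \<sigma> \<Longrightarrow> integrable (NN \<mu> \<sigma>) (\<lambda>x. x)"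
  by (subst integrable_density) (auto intro: integrable_normal_moment_nz_1)

lemma PiN_prob: "0 < \<sigma> \<Longrightarrow> prob_space (PiM K (\<lambda>_. NN \<mu> \<sigma>))"
  by (intro prob_space_PiM NN_prob)

lemma integrable_comp:
  assumes "i \<in> K" "0 < \<sigma>"
  shows "integrable (PiM K (\<lambda>_. NN \<mu> \<sigma>)) (\<lambda>x. x i)"
proof -
  have "integrable (distr (PiM K (\<lambda>_. NN \<mu> \<sigma>)) (NN \<mu> \<sigma>) (\<lambda>x. x i)) (\<lambda>x. x)"
    using distr_PiM_component[of K "\<lambda>_. NN \<mu> \<sigma>" i] assms NN_prob integrable_NN_id by simp
  then show ?thesis
    by (subst (asm) integrable_distr_eq) (use assms in auto)
qed

lemma card_sum: "card {i. i < (l::nat) \<and> P i} = (\<Sum>i<l. if P i then 1 else 0)"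
proof (induction l)
  case 0
  then show ?case by simp
next
  case (Suc l)
  have "{i. i < Suc l \<and> P i} = {i. i < l \<and> P i} \<union> (if P l then {l} else {})"
    by (auto simp: less_Suc_eq)
  then show ?case using Suc by (auto simp: card_insert_if)
qed

lemma meas_cnt[measurable]:
  "(\<lambda>x. real (card {i. i < (l::nat) \<and> x i > (0::real)})) \<in> borel_measurable (PiM {..<l} (\<lambda>_. NN \<mu> \<sigma>))"
proof -
  have eq: "(\<lambda>x. real (card {i. i < l \<and> x i > (0::real)})) = (\<lambda>x. real (\<Sum>i<l. if x i > 0 then 1 else (0::nat)))"
    by (simp add: card_sum)
  show ?thesis unfolding eq by measurable
qed

lemma meas_cnt_pred[measurable]:
  "Measurable.pred (PiM {..<l} (\<lambda>_. NN \<mu> \<sigma>)) (\<lambda>x. c < real (card {i. i < (l::nat) \<and> x i > (0::real)}))"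
proof -
  have eq: "(\<lambda>x. real (card {i. i < l \<and> x i > (0::real)})) = (\<lambda>x. real (\<Sum>i<l. if x i > 0 then 1 else (0::nat)))"
    by (simp add: card_sum)
  show ?thesis unfolding eq by measurable
qed

lemma sym_mu_plus:
  assumes el: "e < l" and sg: "0 < \<sigma>"
  shows "integral\<^sup>L (PiM {..<l} (\<lambda>_. NN \<mu> \<sigma>))
     (\<lambda>x. x e * (if real (card {i. i < l \<and> x i > 0}) > c then 1 else 0)) = mu_plus \<mu> \<sigma> l c"
proof -
  define f where "f i = (if i = e then 0 else if i = 0 then e else i)" for i :: nat
  let ?P = "PiM {..<l} (\<lambda>_. NN \<mu> \<sigma>)"
  let ?T = "\<lambda>\<omega>. \<lambda>n\<in>{..<l}. \<omega> (f n)"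
  have ff: "f (f i) = i" for i by (auto simp: f_def)
  have inj: "inj_on f X" for X by (metis ff inj_onI)
  have fK: "f \<in> {..<l} \<rightarrow> {..<l}" using el by (auto simp: f_def)
  have D: "distr ?P ?P ?T = ?P"
    using distr_PiM_reindex[of "{..<l}" "\<lambda>_. NN \<mu> \<sigma>" f "{..<l}"] NN_prob[OF sg] inj fK by simp
  have Tm: "?T \<in> ?P \<rightarrow>\<^sub>M ?P"
    using fK by (intro measurable_restrict measurable_component_singleton) auto
  let ?g = "\<lambda>x::nat\<Rightarrow>real. x 0 * (if real (card {i. i < l \<and> x i > 0}) > c then 1 else 0)"
  have l0: "0 \<in> {..<l}" using el by simp
  have gm: "?g \<in> borel_measurable ?P"
    using l0 by measurable
  have pt: "?g (?T x) = x e * (if real (card {i. i < l \<and> x i > 0}) > c then 1 else 0)" for x :: "nat \<Rightarrow> real"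
  proof -
    have "{i. i < l \<and> ?T x i > 0} = f ` {i. i < l \<and> x i > 0}"
    proof (intro set_eqI iffI)
      fix i assume "i \<in> {i. i < l \<and> ?T x i > 0}"
      then show "i \<in> f ` {i. i < l \<and> x i > 0}"
        using fK ff by (intro image_eqI[of _ _ "f i"]) auto
    next
      fix i assume "i \<in> f ` {i. i < l \<and> x i > 0}"
      then show "i \<in> {i. i < l \<and> ?T x i > 0}"
        using fK ff by auto
    qed
    then have "card {i. i < l \<and> ?T x i > 0} = card {i. i < l \<and> x i > 0}"
      using inj by (simp add: card_image)
    moreover have "?T x 0 = x e" using el by (simp add: f_def)
    ultimately show ?thesis
      by simp
  qed
  have "mu_plus \<mu> \<sigma> l c = integral\<^sup>L ?P ?g"
    by (simp add: mu_plus_def proposal_space_def)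
  also have "\<dots> = integral\<^sup>L (distr ?P ?P ?T) ?g" using D by simp
  also have "\<dots> = integral\<^sup>L ?P (\<lambda>x. ?g (?T x))"
    by (rule integral_distr[OF Tm gm])
  also have "integral\<^sup>L ?P (\<lambda>x. ?g (?T x)) = integral\<^sup>L ?P
     (\<lambda>x. x e * (if real (card {i. i < l \<and> x i > 0}) > c then 1 else 0))"
    by (simp only: pt)
  finally show ?thesis by simp
qed

lemma density_lt_le:
  assumes fm[measurable]: "f \<in> borel_measurable borel"
  shows "measure (density lborel (\<lambda>x. ennreal (f x))) {..<c} = measure (density lborel (\<lambda>x. ennreal (f x))) {..(c::real)}"
proof -
  have "emeasure (density lborel (\<lambda>x. ennreal (f x))) {..<c} = emeasure (density lborel (\<lambda>x. ennreal (f x))) {..c}"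
  proof (subst (1 2) emeasure_density)
    show "(\<integral>\<^sup>+ x. ennreal (f x) * indicator {..<c} x \<partial>lborel) = (\<integral>\<^sup>+ x. ennreal (f x) * indicator {..c} x \<partial>lborel)"
      by (rule nn_integral_cong_AE) (use AE_lborel_singleton[of c] in \<open>auto elim!: eventually_mono split: split_indicator\<close>)
  qed auto
  then show ?thesis by (simp add: measure_def)
qed

lemma sum_normal_PiM:
  assumes J: "J \<noteq> {}" "finite J" and sg: "0 < \<sigma>"
  shows "distributed (PiM J (\<lambda>_. NN \<mu> \<sigma>)) lborel (\<lambda>y. \<Sum>i\<in>J. y i)
           (normal_density (real (card J) * \<mu>) (sqrt (real (card J) * \<sigma>\<^sup>2)))"
proof -
  let ?P = "PiM J (\<lambda>_. NN \<mu> \<sigma>)"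
  interpret P: prob_space ?P by (rule PiN_prob[OF sg])
  define X where "X i y = (if i \<in> J then y i else 0)" for i and y :: "'a \<Rightarrow> real"
  have Xm: "X i \<in> borel_measurable ?P" for i
    unfolding X_def by (cases "i \<in> J") (simp_all add: measurable_component_singleton)
  have comp: "distr ?P (NN \<mu> \<sigma>) (\<lambda>y. y i) = NN \<mu> \<sigma>" if "i \<in> J" for i
    using distr_PiM_component[of J "\<lambda>_. NN \<mu> \<sigma>" i] NN_prob[OF sg] that by simp
  have dX: "distr ?P borel (X i) = NN \<mu> \<sigma>" if "i \<in> J" for i
  proof -
    have "distr ?P borel (X i) = distr ?P (NN \<mu> \<sigma>) (\<lambda>y. y i)"
      by (rule distr_cong) (use that in \<open>auto simp: X_def\<close>)
    then show ?thesis using comp[OF that] by simp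
  qed
  have indep: "P.indep_vars (\<lambda>_. borel) X J"
  proof (subst P.indep_vars_iff_distr_eq_PiM[OF J(1) Xm])
    have "distr ?P (PiM J (\<lambda>_. borel)) (\<lambda>x. \<lambda>i\<in>J. X i x) = distr ?P ?P (\<lambda>x. x)"
    proof (rule distr_cong)
      show "sets (PiM J (\<lambda>_. borel)) = sets ?P" by (rule sets_PiM_cong) auto
      fix x assume "x \<in> space ?P"
      then show "(\<lambda>i\<in>J. X i x) = x"
        by (auto simp: X_def space_PiM PiE_def extensional_def fun_eq_iff)
    qed simp
    also have "\<dots> = ?P" by simp
    also have "?P = PiM J (\<lambda>i. distr ?P borel (X i))"
      by (rule PiM_cong) (auto simp: dX)
    finally show "distr ?P (PiM J (\<lambda>_. borel)) (\<lambda>x. \<lambda>i\<in>J. X i x) = PiM J (\<lambda>i. distr ?P borel (X i))" .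
  qed
  have dist: "distributed ?P lborel (X i) (normal_density \<mu> \<sigma>)" if "i \<in> J" for i
    unfolding distributed_def
  proof (intro conjI)
    have "distr ?P lborel (X i) = distr ?P borel (X i)"
      by (rule distr_cong) auto
    then show "distr ?P lborel (X i) = density lborel (\<lambda>x. ennreal (normal_density \<mu> \<sigma> x))"
      using dX[OF that] by simp
    show "X i \<in> ?P \<rightarrow>\<^sub>M lborel" using Xm[of i] by simp
  qed simp
  have "distributed ?P lborel (\<lambda>x. \<Sum>i\<in>J. X i x)
     (normal_density (\<Sum>i\<in>J. \<mu>) (sqrt (\<Sum>i\<in>J. \<sigma>\<^sup>2)))"
    by (rule P.sum_indep_normal[OF J(2) J(1) indep]) (use sg dist in auto)
  moreover have "\<And>x. (\<Sum>i\<in>J. X i x) = (\<Sum>i\<in>J. x i)"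
    by (rule sum.cong) (auto simp: X_def)
  ultimately show ?thesis by simp
qed

lemma group_prob:
  assumes J: "J \<noteq> {}" "finite J" and sg: "0 < \<sigma>"
  shows "measure (PiM J (\<lambda>_. NN \<mu> \<sigma>)) {y \<in> space (PiM J (\<lambda>_. NN \<mu> \<sigma>)). (\<Sum>i\<in>J. y i) / real (card J) > t}
     = std_normal_cdf ((\<mu> - t) * sqrt (real (card J)) / \<sigma>)"
proof -
  let ?P = "PiM J (\<lambda>_. NN \<mu> \<sigma>)"
  interpret P: prob_space ?P by (rule PiN_prob[OF sg])
  define g where "g = real (card J)"
  define S where "S y = (\<Sum>i\<in>J. y i)" for y :: "'a \<Rightarrow> real"
  define m where "m = g * \<mu>"
  define s where "s = sqrt g * \<sigma>"
  define c where "c = (\<mu> - t) * sqrt g / \<sigma>"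
  have g0: "g > 0" using J by (simp add: g_def card_gt_0_iff)
  have s0: "s > 0" using g0 sg by (simp add: s_def)
  have ss: "sqrt (g * \<sigma>\<^sup>2) = s" using sg by (simp add: s_def real_sqrt_mult)
  have cs: "c * s = (\<mu> - t) * g"
    using sg g0 by (simp add: c_def s_def field_simps)
  have Seq: "S = (\<lambda>y. sum y J)" by (simp add: S_def fun_eq_iff)
  have d1: "distributed ?P lborel S (normal_density m s)"
    using sum_normal_PiM[OF J sg, of \<mu>] by (simp add: Seq m_def g_def[symmetric] ss)
  have d2: "distributed ?P lborel (\<lambda>x. (S x - m) / s) std_normal_density"
    using P.normal_standard_normal_convert[OF s0] d1 by simp
  have d3: "distributed ?P lborel (\<lambda>x. 0 + (-1) * ((S x - m) / s)) (normal_density (0 + (-1) * 0) (\<bar>-1\<bar> * 1))"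
    by (rule P.normal_density_affine[OF d2]) auto
  define W where "W x = (m - S x) / s" for x
  have dW: "distributed ?P lborel W std_normal_density"
  proof -
    have "W = (\<lambda>x. (m - S x) / s)" by (simp add: W_def fun_eq_iff)
    then show ?thesis using d3 by (simp add: minus_divide_left)
  qed
  have Wm: "W \<in> ?P \<rightarrow>\<^sub>M lborel" using dW by (simp add: distributed_def)
  have seteq: "{y \<in> space ?P. (\<Sum>i\<in>J. y i) / real (card J) > t} = W -` {..<c} \<inter> space ?P"
  proof -
    have "(S y / g > t) = (W y < c)" for y
    proof -
      have "(S y / g > t) = (S y > t * g)" using g0 by (simp add: field_simps)
      also have "\<dots> = (m - S y < c * s)" by (simp add: cs m_def algebra_simps)
      also have "\<dots> = (W y < c)" using s0 by (simp add: W_def field_simps)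
      finally show ?thesis .
    qed
    then show ?thesis by (auto simp: S_def g_def)
  qed
  have "measure ?P {y \<in> space ?P. (\<Sum>i\<in>J. y i) / real (card J) > t} = measure (distr ?P lborel W) {..<c}"
    unfolding seteq by (rule measure_distr[OF Wm, symmetric]) simp
  also have "\<dots> = measure (density lborel (\<lambda>x. ennreal (std_normal_density x))) {..<c}"
    using dW by (simp add: distributed_def)
  also have "\<dots> = measure (density lborel (\<lambda>x. ennreal (std_normal_density x))) {..c}"
    by (rule density_lt_le) simp
  also have "\<dots> = std_normal_cdf c"
    by (simp add: std_normal_cdf_def cdf_def)
  finally show ?thesis by (simp add: c_def g_def)
qed

lemma meas_h:
  assumes "l \<le> n" "e < n"
  shows "(\<lambda>\<zeta>. vise_increment n l \<alpha> t \<zeta> e) \<in> borel_measurable (PiM {..<n} (\<lambda>_. NN \<mu> \<sigma>))"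
proof -
  have eq: "(\<lambda>\<zeta>. vise_increment n l \<alpha> t \<zeta> e) = (\<lambda>\<zeta>. if \<alpha> * real n < real ((\<Sum>i<l. if \<zeta> i > 0 then 1 else (0::nat))
     + (if (\<Sum>i\<in>{l..<n}. \<zeta> i) / real (n - l) > t then n - l else 0)) then \<zeta> e else 0)"
    by (simp add: vise_increment_def vise_accepted_def vise_votes_for_def card_sum fun_eq_iff)
  have c1: "i \<in> {..<n}" if "i < l" for i using that assms by simp
  have c2: "i \<in> {..<n}" if "i \<in> {l..<n}" for i using that by simp
  have c3: "e \<in> {..<n}" using assms by simp
  show ?thesis unfolding eq
    using c1 c2 c3 by measurable
qed

theorem proposition1:
  fixes n l e :: nat and \<mu> \<sigma> \<alpha> t :: real
  assumes "1 \<le> l" and "l \<le> n - 1" and "\<sigma> > 0"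
    and "0 \<le> \<alpha>" and "\<alpha> \<le> 1"
    and "e < l"
  shows "integral\<^sup>L (proposal_space n \<mu> \<sigma>) (\<lambda>\<zeta>. vise_increment n l \<alpha> t \<zeta> e) =
      mu_plus \<mu> \<sigma> l ((\<alpha> + real l / real n - 1) * real n)
        * std_normal_cdf ((\<mu> - t) * sqrt (real (n - l)) / \<sigma>)
    + mu_plus \<mu> \<sigma> l (\<alpha> * real n)
        * (1 - std_normal_cdf ((\<mu> - t) * sqrt (real (n - l)) / \<sigma>))"
proof -
  note sg = assms(3)
  have ln: "l < n" and el: "e < l" using assms by auto
  let ?N = "NN \<mu> \<sigma>"
  let ?I = "{..<l}" and ?J = "{l..<n}"
  let ?PI = "PiM ?I (\<lambda>_. ?N)" and ?PJ = "PiM ?J (\<lambda>_. ?N)"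
  let ?h = "\<lambda>\<zeta>. vise_increment n l \<alpha> t \<zeta> e"
  interpret N: prob_space ?N by (rule NN_prob[OF sg])
  interpret PS: product_sigma_finite "\<lambda>_::nat. ?N"
    by (simp add: product_sigma_finite_def N.sigma_finite_measure_axioms)
  interpret PJ: prob_space ?PJ by (rule PiN_prob[OF sg])
  have IJ: "?I \<union> ?J = {..<n}" using ln by auto
  have Pn: "proposal_space n \<mu> \<sigma> = PiM (?I \<union> ?J) (\<lambda>_. ?N)"
    unfolding proposal_space_def IJ ..
  have int_h: "integrable (PiM (?I \<union> ?J) (\<lambda>_. ?N)) ?h"
    unfolding IJ
  proof (rule Bochner_Integration.integrable_bound[OF integrable_comp[of e "{..<n}", OF _ sg]])
    show "e \<in> {..<n}" using el ln by simp
    show "?h \<in> borel_measurable (PiM {..<n} (\<lambda>_. ?N))"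
      by (rule meas_h) (use el ln in auto)
    show "AE x in PiM {..<n} (\<lambda>_. ?N). norm (?h x) \<le> norm (x e)"
      by (auto simp: vise_increment_def)
  qed
  define G where "G y = ((\<Sum>i\<in>?J. y i) / real (n - l) > t)" for y :: "nat \<Rightarrow> real"
  define A where "A x = (if real (card {i. i < l \<and> x i > 0}) > (\<alpha> + real l / real n - 1) * real n then 1 else (0::real))" for x :: "nat \<Rightarrow> real"
  define C where "C x = (if real (card {i. i < l \<and> x i > 0}) > \<alpha> * real n then 1 else (0::real))" for x :: "nat \<Rightarrow> real"
  define pG where "pG = measure ?PJ {y \<in> space ?PJ. G y}"
  have pt: "?h (merge ?I ?J (x, y)) = x e * (if G y then A x else C x)" for x y
  proof -
    have m1: "merge ?I ?J (x, y) i = x i" if "i < l" for i using that by (simp add: merge_def)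
    have m2: "merge ?I ?J (x, y) i = y i" if "i \<in> ?J" for i using that by (simp add: merge_def)
    have cardeq: "{i. i < l \<and> merge ?I ?J (x, y) i > 0} = {i. i < l \<and> x i > 0}"
      using m1 by auto
    have sumeq: "(\<Sum>i\<in>?J. merge ?I ?J (x, y) i) = (\<Sum>i\<in>?J. y i)"
      using m2 by (rule sum.cong[OF refl])
    have n0: "real n > 0" using ln by simp
    have gam: "(\<alpha> + real l / real n - 1) * real n = \<alpha> * real n - real (n - l)"
      using n0 ln by (simp add: field_simps of_nat_diff)
    show ?thesis
      using el
      by (auto simp: vise_increment_def vise_accepted_def vise_votes_for_def cardeq sumeq m1 G_def A_def C_def gam)
  qed
  have Gm: "{y \<in> space ?PJ. G y} \<in> sets ?PJ"
  proof -
    have "Measurable.pred ?PJ G" unfolding G_def by measurable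
    then show ?thesis by (simp add: pred_def)
  qed
  have inner: "(\<integral>y. ?h (merge ?I ?J (x, y)) \<partial>?PJ) = x e * (C x + (A x - C x) * pG)" for x
  proof -
    have "(\<integral>y. ?h (merge ?I ?J (x, y)) \<partial>?PJ) = (\<integral>y. x e * (C x + (A x - C x) * indicator {y \<in> space ?PJ. G y} y) \<partial>?PJ)"
      by (rule Bochner_Integration.integral_cong[OF refl]) (auto simp: pt split: split_indicator)
    also have "\<dots> = x e * (C x + (A x - C x) * pG)"
    proof -
      let ?S = "{y \<in> space ?PJ. G y}"
      have i1: "integrable ?PJ (\<lambda>y. C x)" by simp
      have i2: "integrable ?PJ (\<lambda>y. (A x - C x) * indicator ?S y)"
        using Gm by (intro integrable_mult_right integrable_real_indicator) (auto simp: PJ.emeasure_finite less_top[symmetric])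
      have "(\<integral>y. C x + (A x - C x) * indicator ?S y \<partial>?PJ) = C x + (A x - C x) * pG"
        using Gm by (subst Bochner_Integration.integral_add[OF i1 i2]) (simp add: pG_def PJ.prob_space)
      then show ?thesis by simp
    qed
    finally show ?thesis .
  qed
  have intA: "integrable ?PI (\<lambda>x. x e * A x)"
    by (rule Bochner_Integration.integrable_bound[OF integrable_comp[of e ?I, OF _ sg]])
       (use el in \<open>auto simp: A_def\<close>)
  have intC: "integrable ?PI (\<lambda>x. x e * C x)"
    by (rule Bochner_Integration.integrable_bound[OF integrable_comp[of e ?I, OF _ sg]])
       (use el in \<open>auto simp: C_def\<close>)
  have "integral\<^sup>L (proposal_space n \<mu> \<sigma>) ?h = (\<integral>x. (\<integral>y. ?h (merge ?I ?J (x, y)) \<partial>?PJ) \<partial>?PI)"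
    unfolding Pn by (rule PS.product_integral_fold[OF _ _ _ int_h]) auto
  also have "\<dots> = (\<integral>x. pG * (x e * A x) + (1 - pG) * (x e * C x) \<partial>?PI)"
    by (simp add: inner algebra_simps)
  also have "\<dots> = pG * (\<integral>x. x e * A x \<partial>?PI) + (1 - pG) * (\<integral>x. x e * C x \<partial>?PI)"
    using intA intC by simp
  also have "(\<integral>x. x e * A x \<partial>?PI) = mu_plus \<mu> \<sigma> l ((\<alpha> + real l / real n - 1) * real n)"
    unfolding A_def by (rule sym_mu_plus[OF el sg])
  also have "(\<integral>x. x e * C x \<partial>?PI) = mu_plus \<mu> \<sigma> l (\<alpha> * real n)"
    unfolding C_def by (rule sym_mu_plus[OF el sg])
  also have "pG = std_normal_cdf ((\<mu> - t) * sqrt (real (n - l)) / \<sigma>)"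
    using group_prob[of ?J \<sigma> \<mu> t] ln sg by (simp add: pG_def G_def)
  finally show ?thesis by (simp add: algebra_simps)
qed

end
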